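(* Let $m\geq 2$ and $n\geq 3$ be integers and let $M$ be the adjacency matrix of the oriented Dutch windmill graph $D^m_n$. Then the Drazin inverse of $M$ is $$M^D=\frac{1}{m}M^{n-1}.$$ Moreover, the only nonzero entries of $M^D$ are equal to $\frac1m$, and they occur precisely at the positions $(i,j)$ satisfying one of the following: (1) $i=1$ and $j=(k-1)(n-1)+n$ for some $k\in\{1,\ldots,m\}$; (2) $i=(k-1)(n-1)+2$ and $j=1$ for some $k\in\{1,\ldots,m\}$; (3) $i=(k-1)(n-1)+\ell$ and $j=i-1$ for some $k\in\{1,\ldots,m\}$ and $\ell\in\{3,\ldots,n\}$; (4) $i=(k-1)(n-1)+\ell$ and $j=(r-1)(n-1)+(\ell-1)$ for some distinct $k,r\in\{1,\ldots,m\}$ and some $\ell\in\{3,\ldots,n\}$. These positions correspond exactly to the ordered pairs of vertices $(i,j)$ such that there is a walk of length $n-1$ from $i$ to $j$ in $D^m_n$.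
   Context: For integers $m\geq 1$, $n\geq 3$, the oriented Dutch windmill graph $D^m_n$ is the directed graph with vertex set $V=\{1,2,\ldots,m(n-1)+1\}$ whose directed edges $(a,b)$ are exactly: $(1,(k-1)(n-1)+2)$ for $k\in\{1,\ldots,m\}$; $((k-1)(n-1)+i,(k-1)(n-1)+i+1)$ for $k\in\{1,\ldots,m\}$ and $i\in\{2,\ldots,n-1\}$; and $((k-1)(n-1)+n,1)$ for $k\in\{1,\ldots,m\}$. (Thus it consists of $m$ directed $n$-cycles sharing the vertex $1$.) Its adjacency matrix $M=(a_{ij})$ is the real $(m(n-1)+1)\times(m(n-1)+1)$ matrix with $a_{ij}=1$ if $(i,j)$ is an edge and $a_{ij}=0$ otherwise. A walk is a sequence of vertices $\langle v_1,\ldots,v_r\rangle$ in which each $(v_t,v_{t+1})$ is an edge; its length is $r-1$. The Drazin inverse of a square matrix $A$ is the unique matrix $X$ with $A^{k+1}X=A^k$, $XAX=X$, $AX=XA$ for some nonnegative integer $k$; the least such $k$ is the Drazin index $\operatorname{ind}(A)$. *)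

theory Defs
  imports "Jordan_Normal_Form.Matrix"
begin

text \<open>Oriented Dutch windmill graph D^m_n on vertices 1 .. m(n-1)+1 (1-based, as in the paper).\<close>

definition dw_nverts :: "nat \<Rightarrow> nat \<Rightarrow> nat" where
  "dw_nverts m n = m * (n - 1) + 1"

definition dw_edge :: "nat \<Rightarrow> nat \<Rightarrow> nat \<Rightarrow> nat \<Rightarrow> bool" where
  "dw_edge m n a b \<longleftrightarrow>
     (\<exists>k\<in>{1..m}. a = 1 \<and> b = (k - 1) * (n - 1) + 2)
   \<or> (\<exists>k\<in>{1..m}. \<exists>i\<in>{2..n - 1}. a = (k - 1) * (n - 1) + i \<and> b = (k - 1) * (n - 1) + i + 1)
   \<or> (\<exists>k\<in>{1..m}. a = (k - 1) * (n - 1) + n \<and> b = 1)"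

definition dw_adj :: "nat \<Rightarrow> nat \<Rightarrow> real mat" where
  "dw_adj m n = mat (dw_nverts m n) (dw_nverts m n)
      (\<lambda>(i, j). if dw_edge m n (i + 1) (j + 1) then 1 else 0)"

definition dw_walk :: "nat \<Rightarrow> nat \<Rightarrow> nat \<Rightarrow> nat \<Rightarrow> nat \<Rightarrow> bool" where
  "dw_walk m n L u v \<longleftrightarrow>
     (\<exists>vs :: nat list. length vs = L + 1 \<and> vs ! 0 = u \<and> vs ! L = v \<and>
        (\<forall>t < L. dw_edge m n (vs ! t) (vs ! (t + 1))))"

definition is_drazin_inverse :: "'a::comm_ring_1 mat \<Rightarrow> 'a mat \<Rightarrow> bool" where
  "is_drazin_inverse A X \<longleftrightarrow> X \<in> carrier_mat (dim_row A) (dim_row A) \<and>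
     (\<exists>k::nat. A ^\<^sub>m (k + 1) * X = A ^\<^sub>m k \<and> X * A * X = X \<and> A * X = X * A)"

definition drazin_inverse :: "'a::comm_ring_1 mat \<Rightarrow> 'a mat" where
  "drazin_inverse A = (THE X. is_drazin_inverse A X)"

end

theory Submission
  imports Defs
begin

definition ph :: "nat \<Rightarrow> nat \<Rightarrow> nat" where
  "ph n a = (if a = 0 then 0 else (a - 1) mod (n - 1) + 1)"
definition cy :: "nat \<Rightarrow> nat \<Rightarrow> nat" where
  "cy n a = (a - 1) div (n - 1)"

lemma ph_rep:
  assumes "n \<ge> 2" "1 \<le> q" "q < n"
  shows "ph n (k*(n-1)+q) = q \<and> cy n (k*(n-1)+q) = k"
proof -
  obtain d where d: "n - 1 = d" "d > 0" using assms by auto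
  obtain r where r: "q = Suc r" using assms by (cases q) auto
  have "r < d" using assms d r by simp
  then show ?thesis using assms unfolding ph_def cy_def d r by simp
qed

lemma ph_dec:
  assumes "n \<ge> 2" "a \<noteq> 0"
  shows "a = cy n a * (n-1) + ph n a" "1 \<le> ph n a" "ph n a < n"
proof -
  obtain d where d: "n - 1 = d" "d > 0" using assms by auto
  have "(a-1) div d * d + (a-1) mod d = a-1" by (rule div_mult_mod_eq)
  then show "a = cy n a * (n-1) + ph n a" using assms unfolding ph_def cy_def d by simp
  show "1 \<le> ph n a" using assms unfolding ph_def by simp
  have "(a-1) mod d < d" using d by simp
  moreover have "ph n a = (a-1) mod d + 1" using assms d by (simp add: ph_def)
  ultimately show "ph n a < n" using d by linarith
qed

lemma ph0[simp]: "ph n 0 = 0" by (simp add: ph_def)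
lemma ph_eq0: "ph n a = 0 \<longleftrightarrow> a = 0" by (simp add: ph_def)

lemma cy_lt:
  assumes "n \<ge> 2" "a \<noteq> 0" "a < m*(n-1)+1"
  shows "cy n a < m"
proof -
  have "a - 1 < m*(n-1)" using assms by simp
  then show ?thesis unfolding cy_def
    by (simp add: less_mult_imp_div_less)
qed

lemma pred_prop:
  assumes "n \<ge> 2" "a \<noteq> 0" "ph n a \<ge> 2"
  shows "ph n (a-1) = ph n a - 1" "cy n (a-1) = cy n a" "a - 1 \<noteq> 0"
proof -
  have d: "a = cy n a * (n-1) + ph n a" "ph n a < n" using ph_dec assms by auto
  have e: "a - 1 = cy n a * (n-1) + (ph n a - 1)" using d assms by linarith
  show "ph n (a-1) = ph n a - 1" "cy n (a-1) = cy n a"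
    using ph_rep[of n "ph n a - 1" "cy n a"] assms d unfolding e[symmetric] by auto
  show "a - 1 \<noteq> 0" using e assms by linarith
qed

lemma sum_decomp:
  fixes g :: "nat \<Rightarrow> 'a::comm_monoid_add"
  assumes "n \<ge> 2"
  shows "(\<Sum>x<m*(n-1)+1. g x) = g 0 + (\<Sum>k<m. \<Sum>q\<in>{1..<n}. g (k*(n-1)+q))"
proof (induction m)
  case 0
  then show ?case by simp
next
  case (Suc m)
  have "(\<Sum>x<Suc m*(n-1)+1. g x) = (\<Sum>x\<in>{0..<m*(n-1)+1}. g x) + (\<Sum>x\<in>{m*(n-1)+1..<Suc m*(n-1)+1}. g x)"
    unfolding lessThan_atLeast0 by (rule sum.atLeastLessThan_concat[symmetric]) auto
  also have "(\<Sum>x\<in>{m*(n-1)+1..<Suc m*(n-1)+1}. g x) = (\<Sum>q\<in>{1..<n}. g (m*(n-1)+q))"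
  proof -
    have e: "{m*(n-1)+1..<Suc m*(n-1)+1} = {1 + m*(n-1)..<n + m*(n-1)}" using assms by simp
    show ?thesis unfolding e sum.shift_bounds_nat_ivl by (simp add: add.commute)
  qed
  finally have h: "(\<Sum>x<Suc m*(n-1)+1. g x) = (\<Sum>x<m*(n-1)+1. g x) + (\<Sum>q\<in>{1..<n}. g(m*(n-1)+q))"
    by (simp only: lessThan_atLeast0)
  have h2: "(\<Sum>x<Suc m*(n-1)+1. g x) = (g 0 + (\<Sum>k<m. \<Sum>q\<in>{1..<n}. g (k*(n-1)+q))) + (\<Sum>q\<in>{1..<n}. g(m*(n-1)+q))"
    by (subst h, subst Suc.IH, rule refl)
  show ?case by (subst h2, simp only: sum.lessThan_Suc add.assoc)
qed

definition pr :: "nat \<Rightarrow> nat \<Rightarrow> nat" where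
  "pr n b = (if ph n b = 1 then 0 else b - 1)"

lemma edge_iff:
  assumes n: "n \<ge> 3" and ab: "a < m*(n-1)+1" "b < m*(n-1)+1"
  shows "dw_edge m n (a+1) (b+1) \<longleftrightarrow> (b \<noteq> 0 \<and> a = pr n b) \<or> (b = 0 \<and> a \<noteq> 0 \<and> ph n a = n-1)"
proof
  assume "dw_edge m n (a+1) (b+1)"
  then consider (c1) k where "k\<in>{1..m}" "a+1 = 1" "b+1 = (k-1)*(n-1)+2"
    | (c2) k i where "k\<in>{1..m}" "i\<in>{2..n-1}" "a+1 = (k-1)*(n-1)+i" "b+1 = (k-1)*(n-1)+i+1"
    | (c3) k where "k\<in>{1..m}" "a+1 = (k-1)*(n-1)+n" "b+1 = 1"
    unfolding dw_edge_def by blast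
  then show "(b \<noteq> 0 \<and> a = pr n b) \<or> (b = 0 \<and> a \<noteq> 0 \<and> ph n a = n-1)"
  proof cases
    case c1
    then have "b = (k-1)*(n-1)+1" "a = 0" by auto
    moreover have "ph n ((k-1)*(n-1)+1) = 1" using ph_rep[of n 1 "k-1"] n by simp
    ultimately show ?thesis by (simp add: pr_def)
  next
    case c2
    then have "b = (k-1)*(n-1)+i" "a = (k-1)*(n-1)+(i-1)" by auto
    moreover have "i < n" using c2 n by auto
    then have "ph n ((k-1)*(n-1)+i) = i" using ph_rep[of n i "k-1"] n c2 by simp
    ultimately show ?thesis using c2 by (auto simp: pr_def)
  next
    case c3
    then have "b = 0" "a = (k-1)*(n-1)+(n-1)" using n by auto
    moreover have "ph n ((k-1)*(n-1)+(n-1)) = n-1" using ph_rep[of n "n-1" "k-1"] n by simp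
    ultimately show ?thesis using n by simp
  qed
next
  assume h: "(b \<noteq> 0 \<and> a = pr n b) \<or> (b = 0 \<and> a \<noteq> 0 \<and> ph n a = n-1)"
  show "dw_edge m n (a+1) (b+1)"
  proof (cases "b = 0")
    case False
    then have a: "a = pr n b" using h by simp
    have d: "b = cy n b * (n-1) + ph n b" "1 \<le> ph n b" "ph n b < n" using ph_dec[of n b] n False by auto
    have cb: "cy n b < m" using cy_lt[of n b m] n False ab by simp
    show ?thesis
    proof (cases "ph n b = 1")
      case True
      then have "a + 1 = 1" "b + 1 = ((cy n b + 1) - 1)*(n-1)+2" using a d by (auto simp: pr_def)
      moreover have "cy n b + 1 \<in> {1..m}" using cb by simp
      ultimately show ?thesis unfolding dw_edge_def by blast
    next
      case False
      then have "a + 1 = ((cy n b + 1) - 1)*(n-1)+ph n b" "b + 1 = ((cy n b + 1) - 1)*(n-1)+ph n b + 1"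
        using a d by (auto simp: pr_def)
      moreover have "cy n b + 1 \<in> {1..m}" "ph n b \<in> {2..n-1}" using cb d False by auto
      ultimately show ?thesis unfolding dw_edge_def by blast
    qed
  next
    case True
    then have a: "a \<noteq> 0" "ph n a = n - 1" using h by auto
    have d: "a = cy n a * (n-1) + ph n a" using ph_dec[of n a] n a by auto
    have ca: "cy n a < m" using cy_lt[of n a m] n a ab by simp
    have "a + 1 = ((cy n a + 1) - 1)*(n-1)+n" "b + 1 = 1" using a d True n by auto
    moreover have "cy n a + 1 \<in> {1..m}" using ca by simp
    ultimately show ?thesis unfolding dw_edge_def by blast
  qed
qed

lemma edge_range:
  assumes n: "n \<ge> 3" and e: "dw_edge m n u v"
  shows "1 \<le> u \<and> u \<le> m*(n-1)+1 \<and> 1 \<le> v \<and> v \<le> m*(n-1)+1"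
proof -
  have b: "(k-1)*(n-1) + n \<le> m*(n-1)+1" if "k \<in> {1..m}" for k
  proof -
    have "k-1 \<le> m-1" using that by auto
    then have "(k-1)*(n-1) \<le> (m-1)*(n-1)" by (rule mult_le_mono1)
    moreover have "(m-1)*(n-1) + n = m*(n-1)+1"
    proof -
      have "m \<ge> 1" using that by auto
      then obtain m' where "m = Suc m'" by (cases m) auto
      then show ?thesis using n by simp
    qed
    ultimately show ?thesis by linarith
  qed
  from e show ?thesis unfolding dw_edge_def
  proof (elim disjE bexE conjE)
    fix k assume "k \<in> {1..m}" "u = 1" "v = (k-1)*(n-1)+2"
    then show ?thesis using b[of k] n by auto
  next
    fix k i assume "k \<in> {1..m}" "i \<in> {2..n-1}" "u = (k-1)*(n-1)+i" "v = (k-1)*(n-1)+i+1"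
    then show ?thesis using b[of k] n by (auto; linarith)
  next
    fix k assume "k \<in> {1..m}" "u = (k-1)*(n-1)+n" "v = 1"
    then show ?thesis using b[of k] n by auto
  qed
qed

lemma A_carrier: "dw_adj m n \<in> carrier_mat (m*(n-1)+1) (m*(n-1)+1)"
  unfolding dw_adj_def dw_nverts_def by simp

lemma A_entry:
  assumes n: "n \<ge> 3" and ab: "a < m*(n-1)+1" "b < m*(n-1)+1"
  shows "dw_adj m n $$ (a,b) = (if (b \<noteq> 0 \<and> a = pr n b) \<or> (b = 0 \<and> a \<noteq> 0 \<and> ph n a = n-1) then 1 else 0)"
  using ab edge_iff[OF n ab] unfolding dw_adj_def dw_nverts_def by simp

lemma pr_lt: "pr n b \<le> b" unfolding pr_def by simp

lemma colsum:
  fixes f :: "nat \<Rightarrow> real"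
  assumes n: "n \<ge> 3" and b: "b < m*(n-1)+1"
  shows "(\<Sum>x<m*(n-1)+1. f x * dw_adj m n $$ (x,b)) =
    (if b = 0 then (\<Sum>k<m. f (k*(n-1)+(n-1))) else f (pr n b))"
proof (cases "b = 0")
  case False
  have "(\<Sum>x<m*(n-1)+1. f x * dw_adj m n $$ (x,b)) = (\<Sum>x<m*(n-1)+1. if x = pr n b then f x else 0)"
    by (rule sum.cong) (use A_entry[OF n _ b] False in auto)
  also have "\<dots> = f (pr n b)" using pr_lt[of n b] b by (simp add: sum.delta')
  finally show ?thesis using False by simp
next
  case True
  have "(\<Sum>x<m*(n-1)+1. f x * dw_adj m n $$ (x,b)) =
        (\<Sum>x<m*(n-1)+1. f x * (if x \<noteq> 0 \<and> ph n x = n-1 then 1 else 0))"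
    by (rule sum.cong) (use A_entry[OF n _ b] True in auto)
  also have "\<dots> = (\<lambda>x. f x * (if x \<noteq> 0 \<and> ph n x = n-1 then 1 else 0)) 0 +
     (\<Sum>k<m. \<Sum>q\<in>{1..<n}. (\<lambda>x. f x * (if x \<noteq> 0 \<and> ph n x = n-1 then 1 else 0)) (k*(n-1)+q))"
    by (rule sum_decomp) (use n in simp)
  also have "\<dots> = 0 + (\<Sum>k<m. \<Sum>q\<in>{1..<n}. if q = n-1 then f (k*(n-1)+q) else 0)"
    by (intro arg_cong2[where f = "(+)"] sum.cong refl) (use ph_rep[of n] n in auto)
  also have "\<dots> = (\<Sum>k<m. f (k*(n-1)+(n-1)))"
    by (simp only: add.left_neutral, intro sum.cong refl, subst sum.delta) (use n in auto)
  finally show ?thesis using True by simp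
qed

definition FL :: "nat \<Rightarrow> nat \<Rightarrow> nat \<Rightarrow> nat \<Rightarrow> real" where
  "FL n L a b = (if ph n a + L < n then (if ph n b = ph n a + L \<and> (a = 0 \<or> cy n b = cy n a) then 1 else 0)
      else (if ph n b + n = ph n a + L then 1 else 0))"

lemma FL_step1:
  assumes n: "n \<ge> 3" and a: "a < m*(n-1)+1" and b: "b < m*(n-1)+1" "b \<noteq> 0" and L: "L + 1 \<le> n - 1"
  shows "FL n L a (pr n b) = FL n (L+1) a b"
proof -
  have db: "1 \<le> ph n b" "ph n b < n" using ph_dec[of n b] n b by auto
  have pa: "ph n a < n" using ph_dec[of n a] n by (cases "a = 0") auto
  have pa0: "ph n a = 0 \<longleftrightarrow> a = 0" by (rule ph_eq0)
  show ?thesis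
  proof (cases "ph n b = 1")
    case True
    then have "pr n b = 0" by (simp add: pr_def)
    then show ?thesis unfolding FL_def using True db pa pa0 n L by auto
  next
    case False
    then have pb: "pr n b = b - 1" "ph n (b-1) = ph n b - 1" "cy n (b-1) = cy n b" "b - 1 \<noteq> 0"
      using pred_prop[of n b] db n b by (auto simp: pr_def)
    show ?thesis unfolding FL_def pb using False db pa pa0 n L by auto
  qed
qed

lemma FL_step0:
  assumes n: "n \<ge> 3" and a: "a < m*(n-1)+1" and L: "L + 1 \<le> n - 1"
  shows "(\<Sum>k<m. FL n L a (k*(n-1)+(n-1))) = FL n (L+1) a 0"
proof -
  have pa: "ph n a < n" using ph_dec[of n a] n by (cases "a = 0") auto
  have pa0: "ph n a = 0 \<longleftrightarrow> a = 0" by (rule ph_eq0)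
  have r: "ph n (k*(n-1)+(n-1)) = n-1" "cy n (k*(n-1)+(n-1)) = k" for k
    using ph_rep[of n "n-1" k] n by auto
  show ?thesis
  proof (cases "ph n a + L = n - 1")
    case True
    then have a0: "a \<noteq> 0" using L pa0 by auto
    have ca: "cy n a < m" using cy_lt[of n a m] n a0 a by simp
    have "(\<Sum>k<m. FL n L a (k*(n-1)+(n-1))) = (\<Sum>k<m. if k = cy n a then 1 else 0)"
      by (rule sum.cong) (use True a0 r n in \<open>auto simp: FL_def\<close>)
    also have "\<dots> = 1" using ca by simp
    finally show ?thesis using True n unfolding FL_def by auto
  next
    case False
    have "(\<Sum>k<m. FL n L a (k*(n-1)+(n-1))) = (\<Sum>k<m. 0)"
      by (rule sum.cong) (use False r n pa L in \<open>auto simp: FL_def\<close>)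
    then show ?thesis using False n pa L unfolding FL_def by auto
  qed
qed

lemma mult_entry:
  assumes "B \<in> carrier_mat N N" "C \<in> carrier_mat N N" "a < N" "b < N"
  shows "(B * C) $$ (a,b) = (\<Sum>x<N. B $$ (a,x) * C $$ (x,b))"
  using assms by (auto simp: scalar_prod_def lessThan_atLeast0 intro!: sum.cong)

lemma FL0:
  assumes n: "n \<ge> 3"
  shows "FL n 0 a b = (if a = b then 1 else 0)"
proof (cases "a = 0")
  case True
  then show ?thesis using n ph_eq0[of n b] by (auto simp: FL_def)
next
  case False
  have da: "a = cy n a * (n-1) + ph n a" "1 \<le> ph n a" "ph n a < n" using ph_dec[of n a] n False by auto
  show ?thesis
  proof (cases "ph n b = ph n a \<and> cy n b = cy n a")
    case True
    then have "b \<noteq> 0" using da ph_eq0[of n b] by auto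
    then have "b = cy n b * (n-1) + ph n b" using ph_dec[of n b] n by auto
    then have "b = a" using True da by simp
    then show ?thesis using da False by (simp add: FL_def)
  next
    case False
    then have "a \<noteq> b" by auto
    then show ?thesis using False da \<open>a \<noteq> 0\<close> by (auto simp: FL_def)
  qed
qed

lemma powA:
  assumes n: "n \<ge> 3"
  shows "L \<le> n - 1 \<Longrightarrow> dw_adj m n ^\<^sub>m L = mat (m*(n-1)+1) (m*(n-1)+1) (\<lambda>(a,b). FL n L a b)"
proof (induction L)
  case 0
  have "dim_row (dw_adj m n) = m*(n-1)+1" using A_carrier[of m n] by simp
  then show ?case by (auto intro!: eq_matI simp: FL0[OF n])
next
  case (Suc L)
  let ?N = "m*(n-1)+1"
  have IH: "dw_adj m n ^\<^sub>m L = mat ?N ?N (\<lambda>(a,b). FL n L a b)" using Suc by simp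
  have "dw_adj m n ^\<^sub>m Suc L = mat ?N ?N (\<lambda>(a,b). FL n L a b) * dw_adj m n" using IH by simp
  also have "\<dots> = mat ?N ?N (\<lambda>(a,b). FL n (Suc L) a b)"
  proof (rule eq_matI)
    fix a b assume ab: "a < dim_row (mat ?N ?N (\<lambda>(a,b). FL n (Suc L) a b))"
      "b < dim_col (mat ?N ?N (\<lambda>(a,b). FL n (Suc L) a b))"
    then have a: "a < ?N" and b: "b < ?N" by auto
    have "(mat ?N ?N (\<lambda>(a,b). FL n L a b) * dw_adj m n) $$ (a,b)
        = (\<Sum>x<?N. mat ?N ?N (\<lambda>(a,b). FL n L a b) $$ (a,x) * dw_adj m n $$ (x,b))"
      by (rule mult_entry[OF _ A_carrier a b]) simp
    also have "\<dots> = (\<Sum>x<?N. FL n L a x * dw_adj m n $$ (x,b))"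
      by (rule sum.cong) (use a in auto)
    also have "\<dots> = (if b = 0 then (\<Sum>k<m. FL n L a (k*(n-1)+(n-1))) else FL n L a (pr n b))"
      by (rule colsum[OF n b])
    also have "\<dots> = FL n (L+1) a b"
      using FL_step0[OF n a, of L] FL_step1[OF n a b _, of L] Suc.prems by auto
    finally show "(mat ?N ?N (\<lambda>(a,b). FL n L a b) * dw_adj m n) $$ (a,b)
        = mat ?N ?N (\<lambda>(a,b). FL n (Suc L) a b) $$ (a,b)" using a b by simp
  qed (use A_carrier in auto)
  finally show ?case .
qed

definition Pf :: "nat \<Rightarrow> nat \<Rightarrow> nat \<Rightarrow> real" where
  "Pf n a b = (if a = 0 then (if ph n b = n-1 then 1 else 0) else (if ph n b + 1 = ph n a then 1 else 0))"

lemma FL_P: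
  assumes n: "n \<ge> 3"
  shows "FL n (n-1) a b = Pf n a b"
proof (cases "a = 0")
  case True then show ?thesis using n by (simp add: FL_def Pf_def)
next
  case False
  then have "1 \<le> ph n a" using ph_dec[of n a] n by auto
  then show ?thesis using False n by (auto simp: FL_def Pf_def)
qed

lemma powP:
  assumes n: "n \<ge> 3"
  shows "dw_adj m n ^\<^sub>m (n-1) = mat (m*(n-1)+1) (m*(n-1)+1) (\<lambda>(a,b). Pf n a b)"
proof -
  have "\<forall>a b. FL n (n-1) a b = Pf n a b" using FL_P[OF n] by blast
  then have e: "(\<lambda>(a,b). FL n (n-1) a b) = (\<lambda>(a,b). Pf n a b)" by auto
  show ?thesis using powA[OF n, of "n-1" m] unfolding e by simp
qed

lemma massoc: "B \<in> carrier_mat N N \<Longrightarrow> C \<in> carrier_mat N N \<Longrightarrow> D \<in> carrier_mat N N \<Longrightarrow> B * C * D = B * (C * D)"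
  by (rule assoc_mult_mat)

lemma mcar: "B \<in> carrier_mat N N \<Longrightarrow> C \<in> carrier_mat N N \<Longrightarrow> B * C \<in> carrier_mat N N"
  by (rule mult_carrier_mat)

lemma pow_add:
  assumes A: "(A :: 'a::semiring_1 mat) \<in> carrier_mat N N"
  shows "A ^\<^sub>m (i + j) = A ^\<^sub>m i * A ^\<^sub>m j"
proof (induction j)
  case 0 then show ?case using A by simp
next
  case (Suc j)
  have "A ^\<^sub>m (i + Suc j) = (A ^\<^sub>m i * A ^\<^sub>m j) * A" using Suc by simp
  also have "\<dots> = A ^\<^sub>m i * (A ^\<^sub>m j * A)" using A by (simp add: massoc[of _ N] mcar[of _ N] del: pow_mat.simps)
  finally show ?case by simp
qed

lemma pow_one: "(A :: 'a::semiring_1 mat) \<in> carrier_mat N N \<Longrightarrow> A ^\<^sub>m 1 = A"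
  by simp

lemma pow_Suc_left:
  assumes A: "(A :: 'a::semiring_1 mat) \<in> carrier_mat N N"
  shows "A ^\<^sub>m Suc i = A * A ^\<^sub>m i"
  using pow_add[OF A, of 1 i] A by simp

lemma smult_smult_mat: "(a::'a::comm_ring_1) \<cdot>\<^sub>m (b \<cdot>\<^sub>m A) = (a * b) \<cdot>\<^sub>m A"
  by (rule eq_matI) (auto simp: mult.assoc)

lemma pow_comm_X:
  assumes A: "(A :: 'a::comm_ring_1 mat) \<in> carrier_mat N N" and X: "X \<in> carrier_mat N N"
    and c: "A * X = X * A"
  shows "A ^\<^sub>m i * X = X * A ^\<^sub>m i"
proof (induction i)
  case 0 then show ?case using A X by simp
next
  case (Suc i)
  have "A ^\<^sub>m Suc i * X = A ^\<^sub>m i * (A * X)" using A X by (simp add: massoc[of _ N] mcar[of _ N])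
  also have "\<dots> = (A ^\<^sub>m i * X) * A" using A X c by (simp add: massoc[of _ N] mcar[of _ N])
  also have "\<dots> = X * (A ^\<^sub>m i * A)" using A X Suc by (simp add: massoc[of _ N] mcar[of _ N] del: pow_mat.simps)
  finally show ?case by simp
qed

lemma drazin_high:
  assumes A: "(A :: 'a::comm_ring_1 mat) \<in> carrier_mat N N" and X: "X \<in> carrier_mat N N"
    and x1: "A ^\<^sub>m (k+1) * X = A ^\<^sub>m k" and K: "k \<le> K"
  shows "A ^\<^sub>m (K+1) * X = A ^\<^sub>m K"
proof -
  have "A ^\<^sub>m (K+1) * X = (A ^\<^sub>m (K-k) * A ^\<^sub>m (k+1)) * X"
    using pow_add[OF A, of "K-k" "k+1"] K by simp
  also have "\<dots> = A ^\<^sub>m (K-k) * (A ^\<^sub>m (k+1) * X)" using A X by (simp add: massoc[of _ N] mcar[of _ N] del: pow_mat.simps)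
  also have "\<dots> = A ^\<^sub>m (K-k) * A ^\<^sub>m k" using x1 by simp
  also have "\<dots> = A ^\<^sub>m K" using pow_add[OF A, of "K-k" k] K by simp
  finally show ?thesis .
qed

lemma drazin_left:
  assumes A: "(A :: 'a::comm_ring_1 mat) \<in> carrier_mat N N" and X: "X \<in> carrier_mat N N"
    and x2: "X * A * X = X" and x3: "A * X = X * A"
  shows "\<exists>Z \<in> carrier_mat N N. A * X = A ^\<^sub>m (Suc i) * Z"
proof (induction i)
  case 0 then show ?case using A X by (intro bexI[of _ X]) auto
next
  case (Suc i)
  then obtain Z where Z: "Z \<in> carrier_mat N N" "A * X = A ^\<^sub>m (Suc i) * Z" by blast
  have E: "(A * X) * (A * X) = A * X"
  proof -
    have "(A * X) * (A * X) = A * (X * A * X)" using A X by (simp add: massoc[of _ N] mcar[of _ N])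
    then show ?thesis using x2 by simp
  qed
  have "A * X = (A * X) * (A ^\<^sub>m (Suc i) * Z)" by (subst Z(2)[symmetric]) (rule E[symmetric])
  also have "\<dots> = A * ((X * A ^\<^sub>m (Suc i)) * Z)" using A X Z(1) by (simp add: massoc[of _ N] mcar[of _ N] del: pow_mat.simps)
  also have "\<dots> = A * ((A ^\<^sub>m (Suc i) * X) * Z)" using pow_comm_X[OF A X x3] by (simp del: pow_mat.simps)
  also have "\<dots> = (A * A ^\<^sub>m (Suc i)) * (X * Z)" using A X Z(1) by (simp add: massoc[of _ N] mcar[of _ N] del: pow_mat.simps)
  also have "\<dots> = A ^\<^sub>m (Suc (Suc i)) * (X * Z)" using pow_Suc_left[OF A, of "Suc i"] by simp
  finally show ?case using X Z by (intro bexI[of _ "X * Z"]) auto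
qed

lemma drazin_right:
  assumes A: "(A :: 'a::comm_ring_1 mat) \<in> carrier_mat N N" and X: "X \<in> carrier_mat N N"
    and x2: "X * A * X = X" and x3: "A * X = X * A"
  shows "\<exists>Z \<in> carrier_mat N N. A * X = Z * A ^\<^sub>m (Suc i)"
proof (induction i)
  case 0 then show ?case using A X x3 by (intro bexI[of _ X]) auto
next
  case (Suc i)
  then obtain Z where Z: "Z \<in> carrier_mat N N" "A * X = Z * A ^\<^sub>m (Suc i)" by blast
  have E: "(X * A) * (X * A) = X * A"
  proof -
    have "(X * A) * (X * A) = (X * A * X) * A" using A X by (simp add: massoc[of _ N] mcar[of _ N])
    then show ?thesis using x2 by simp
  qed
  have "A * X = (X * A) * (X * A)" using E x3 by simp
  also have "\<dots> = (Z * A ^\<^sub>m (Suc i)) * (X * A)" by (subst (1) x3[symmetric], subst Z(2)) (rule refl)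
  also have "\<dots> = Z * ((A ^\<^sub>m (Suc i) * X) * A)" using A X Z(1) by (simp add: massoc[of _ N] mcar[of _ N] del: pow_mat.simps)
  also have "\<dots> = Z * ((X * A ^\<^sub>m (Suc i)) * A)" using pow_comm_X[OF A X x3] by (simp del: pow_mat.simps)
  also have "\<dots> = (Z * X) * (A ^\<^sub>m (Suc i) * A)" using A X Z(1) by (simp add: massoc[of _ N] mcar[of _ N] del: pow_mat.simps)
  also have "\<dots> = (Z * X) * A ^\<^sub>m (Suc (Suc i))" by simp
  finally show ?case using X Z by (intro bexI[of _ "Z * X"]) auto
qed

lemma drazin_unique:
  fixes A X Y :: "'a::comm_ring_1 mat"
  assumes A: "A \<in> carrier_mat N N" and X: "X \<in> carrier_mat N N" and Y: "Y \<in> carrier_mat N N"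
    and x1: "A ^\<^sub>m (k+1) * X = A ^\<^sub>m k" and x2: "X * A * X = X" and x3: "A * X = X * A"
    and y1: "A ^\<^sub>m (j+1) * Y = A ^\<^sub>m j" and y2: "Y * A * Y = Y" and y3: "A * Y = Y * A"
  shows "X = Y"
proof -
  define K where "K = k + j + 1"
  have xK: "A ^\<^sub>m (K+1) * X = A ^\<^sub>m K" by (rule drazin_high[OF A X x1]) (simp add: K_def)
  have yK: "A ^\<^sub>m (K+1) * Y = A ^\<^sub>m K" by (rule drazin_high[OF A Y y1]) (simp add: K_def)
  have KS: "K = Suc (K - 1)" using K_def by simp
  have AK: "A ^\<^sub>m K * A = A ^\<^sub>m (K+1)" by simp
  have PK: "A ^\<^sub>m K \<in> carrier_mat N N" using A by simp
  have AX: "A * X \<in> carrier_mat N N" "A * Y \<in> carrier_mat N N" using A X Y by auto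
  obtain Z1 where Z1: "Z1 \<in> carrier_mat N N" "A * X = Z1 * A ^\<^sub>m K"
    using drazin_right[OF A X x2 x3, of "K-1"] KS by auto
  obtain Z2 where Z2: "Z2 \<in> carrier_mat N N" "A * Y = A ^\<^sub>m K * Z2"
    using drazin_left[OF A Y y2 y3, of "K-1"] KS by auto
  have EY: "A ^\<^sub>m K * (A * Y) = A ^\<^sub>m K"
  proof -
    have "A ^\<^sub>m K * (A * Y) = (A ^\<^sub>m K * A) * Y" by (rule massoc[symmetric, OF PK A Y])
    also have "\<dots> = A ^\<^sub>m (K+1) * Y" by (simp only: AK)
    finally show ?thesis using yK by simp
  qed
  have XE: "(A * X) * A ^\<^sub>m K = A ^\<^sub>m K"
  proof -
    have "(A * X) * A ^\<^sub>m K = A * (X * A ^\<^sub>m K)" by (rule massoc[OF A X PK])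
    also have "\<dots> = A * (A ^\<^sub>m K * X)" by (simp only: pow_comm_X[OF A X x3])
    also have "\<dots> = (A * A ^\<^sub>m K) * X" by (rule massoc[symmetric, OF A PK X])
    also have "\<dots> = A ^\<^sub>m (K+1) * X" by (simp only: pow_Suc_left[OF A, of K, symmetric] Suc_eq_plus1)
    finally show ?thesis using xK by simp
  qed
  have "(A * X) * (A * Y) = (Z1 * A ^\<^sub>m K) * (A * Y)" by (simp only: Z1(2))
  also have "\<dots> = Z1 * (A ^\<^sub>m K * (A * Y))" by (rule massoc[OF Z1(1) PK AX(2)])
  also have "\<dots> = Z1 * A ^\<^sub>m K" by (simp only: EY)
  finally have e1: "(A * X) * (A * Y) = A * X" by (simp only: Z1(2))
  have "(A * X) * (A * Y) = (A * X) * (A ^\<^sub>m K * Z2)" by (simp only: Z2(2))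
  also have "\<dots> = ((A * X) * A ^\<^sub>m K) * Z2" by (rule massoc[symmetric, OF AX(1) PK Z2(1)])
  also have "\<dots> = A ^\<^sub>m K * Z2" by (simp only: XE)
  finally have e2: "(A * X) * (A * Y) = A * Y" by (simp only: Z2(2))
  have EF: "A * X = A * Y" using e1 e2 by simp
  have "X = X * A * X" using x2 by simp
  also have "\<dots> = X * (A * X)" by (rule massoc[OF X A X])
  also have "\<dots> = X * (A * Y)" by (simp only: EF)
  also have "\<dots> = (X * A) * Y" by (rule massoc[symmetric, OF X A Y])
  also have "\<dots> = (Y * A) * Y" by (simp only: x3[symmetric] EF y3)
  also have "\<dots> = Y" by (rule y2)
  finally show ?thesis .
qed

definition Qf :: "nat \<Rightarrow> nat \<Rightarrow> nat \<Rightarrow> nat \<Rightarrow> real" where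
  "Qf m n a b = (if b = 0 then (if a = 0 then real m else 0) else (if a \<noteq> 0 \<and> ph n a = ph n b then 1 else 0))"

lemma powQ:
  assumes n: "n \<ge> 3"
  shows "dw_adj m n ^\<^sub>m n = mat (m*(n-1)+1) (m*(n-1)+1) (\<lambda>(a,b). Qf m n a b)"
proof -
  let ?N = "m*(n-1)+1"
  have "dw_adj m n ^\<^sub>m n = dw_adj m n ^\<^sub>m (Suc (n-1))" using n by simp
  also have "\<dots> = mat ?N ?N (\<lambda>(a,b). Pf n a b) * dw_adj m n" using powP[OF n, of m] by simp
  also have "\<dots> = mat ?N ?N (\<lambda>(a,b). Qf m n a b)"
  proof (rule eq_matI)
    fix a b assume ab: "a < dim_row (mat ?N ?N (\<lambda>(a,b). Qf m n a b))"
      "b < dim_col (mat ?N ?N (\<lambda>(a,b). Qf m n a b))"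
    then have a: "a < ?N" and b: "b < ?N" by auto
    have pa: "ph n a < n" using ph_dec[of n a] n by (cases "a = 0") auto
    have pa0: "ph n a = 0 \<longleftrightarrow> a = 0" by (rule ph_eq0)
    have "(mat ?N ?N (\<lambda>(a,b). Pf n a b) * dw_adj m n) $$ (a,b)
        = (\<Sum>x<?N. mat ?N ?N (\<lambda>(a,b). Pf n a b) $$ (a,x) * dw_adj m n $$ (x,b))"
      by (rule mult_entry[OF _ A_carrier a b]) simp
    also have "\<dots> = (\<Sum>x<?N. Pf n a x * dw_adj m n $$ (x,b))"
      by (rule sum.cong) (use a in auto)
    also have "\<dots> = (if b = 0 then (\<Sum>k<m. Pf n a (k*(n-1)+(n-1))) else Pf n a (pr n b))"
      by (rule colsum[OF n b])
    also have "\<dots> = Qf m n a b"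
    proof (cases "b = 0")
      case True
      have r: "ph n (k*(n-1)+(n-1)) = n-1" for k using ph_rep[of n "n-1" k] n by auto
      have "(\<Sum>k<m. Pf n a (k*(n-1)+(n-1))) = (\<Sum>k<m. if a = 0 then 1 else 0)"
        by (rule sum.cong) (use r pa n in \<open>auto simp: Pf_def\<close>)
      then show ?thesis using True by (simp add: Qf_def)
    next
      case False
      have db: "1 \<le> ph n b" "ph n b < n" using ph_dec[of n b] n b False by auto
      show ?thesis
      proof (cases "ph n b = 1")
        case True
        then have "pr n b = 0" by (simp add: pr_def)
        then show ?thesis using True False n pa0 by (auto simp: Pf_def Qf_def)
      next
        case F2: False
        then have pb: "pr n b = b - 1" "ph n (b-1) = ph n b - 1"
          using pred_prop[of n b] db n False by (auto simp: pr_def)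
        show ?thesis unfolding pb(1) using pb(2) F2 False db n pa0 by (auto simp: Pf_def Qf_def)
      qed
    qed
    finally show "(mat ?N ?N (\<lambda>(a,b). Pf n a b) * dw_adj m n) $$ (a,b)
        = mat ?N ?N (\<lambda>(a,b). Qf m n a b) $$ (a,b)" using a b by simp
  qed (use A_carrier in auto)
  finally show ?thesis .
qed

lemma PQ:
  assumes n: "n \<ge> 3"
  shows "mat (m*(n-1)+1) (m*(n-1)+1) (\<lambda>(a,b). Pf n a b) * mat (m*(n-1)+1) (m*(n-1)+1) (\<lambda>(a,b). Qf m n a b)
       = real m \<cdot>\<^sub>m mat (m*(n-1)+1) (m*(n-1)+1) (\<lambda>(a,b). Pf n a b)"
  (is "?P * ?Q = _")
proof (rule eq_matI)
  let ?N = "m*(n-1)+1"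
  fix a b assume "a < dim_row (real m \<cdot>\<^sub>m ?P)" "b < dim_col (real m \<cdot>\<^sub>m ?P)"
  then have a: "a < ?N" and b: "b < ?N" by auto
  have pa: "ph n a < n" using ph_dec[of n a] n by (cases "a = 0") auto
  have pa0: "ph n a = 0 \<longleftrightarrow> a = 0" by (rule ph_eq0)
  have r: "ph n (k*(n-1)+q) = q" "k*(n-1)+q \<noteq> 0" if "q \<in> {1..<n}" for k q
    using ph_rep[of n q k] n that by auto
  have "(?P * ?Q) $$ (a,b) = (\<Sum>x<?N. ?P $$ (a,x) * ?Q $$ (x,b))"
    by (rule mult_entry[OF _ _ a b]) auto
  also have "\<dots> = (\<Sum>x<?N. Pf n a x * Qf m n x b)"
    by (rule sum.cong) (use a b in auto)
  also have "\<dots> = (\<lambda>x. Pf n a x * Qf m n x b) 0 + (\<Sum>k<m. \<Sum>q\<in>{1..<n}. (\<lambda>x. Pf n a x * Qf m n x b) (k*(n-1)+q))"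
    by (rule sum_decomp) (use n in simp)
  also have "\<dots> = real m * Pf n a b"
  proof (cases "b = 0")
    case True
    have "(\<Sum>k<m. \<Sum>q\<in>{1..<n}. (\<lambda>x. Pf n a x * Qf m n x b) (k*(n-1)+q)) = (\<Sum>k<m. \<Sum>q\<in>{1..<n}. 0)"
      by (intro sum.cong refl) (use r True in \<open>auto simp: Qf_def\<close>)
    then show ?thesis using True by (simp add: Qf_def)
  next
    case False
    have db: "1 \<le> ph n b" "ph n b < n" using ph_dec[of n b] n b False by auto
    have "(\<Sum>k<m. \<Sum>q\<in>{1..<n}. (\<lambda>x. Pf n a x * Qf m n x b) (k*(n-1)+q))
        = (\<Sum>k<m. \<Sum>q\<in>{1..<n}. if q = ph n b then Pf n a b else 0)"
      by (intro sum.cong refl) (use r False in \<open>auto simp: Qf_def Pf_def\<close>)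
    also have "\<dots> = (\<Sum>k<m. Pf n a b)"
      by (intro sum.cong refl, subst sum.delta) (use db in auto)
    finally show ?thesis using False by (simp add: Qf_def)
  qed
  finally show "(?P * ?Q) $$ (a,b) = (real m \<cdot>\<^sub>m ?P) $$ (a,b)" using a b by simp
qed auto

lemma walk_0: "dw_walk m n 0 u v \<longleftrightarrow> u = v"
proof
  assume "dw_walk m n 0 u v"
  then obtain vs :: "nat list" where "vs ! 0 = u" "vs ! 0 = v" unfolding dw_walk_def by auto
  then show "u = v" by simp
next
  assume "u = v"
  then show "dw_walk m n 0 u v" unfolding dw_walk_def by (intro exI[of _ "[u]"]) auto
qed

lemma walk_Suc: "dw_walk m n (Suc L) u v \<longleftrightarrow> (\<exists>w. dw_walk m n L u w \<and> dw_edge m n w v)"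
proof
  assume "dw_walk m n (Suc L) u v"
  then obtain vs :: "nat list" where vs: "length vs = Suc L + 1" "vs ! 0 = u" "vs ! Suc L = v"
    "\<forall>t < Suc L. dw_edge m n (vs ! t) (vs ! (t + 1))" unfolding dw_walk_def by blast
  have "dw_walk m n L u (vs ! L)" unfolding dw_walk_def
    by (intro exI[of _ "take (L+1) vs"]) (use vs in auto)
  moreover have "dw_edge m n (vs ! L) v" using vs(4)[rule_format, of L] vs(3) by simp
  ultimately show "\<exists>w. dw_walk m n L u w \<and> dw_edge m n w v" by blast
next
  assume "\<exists>w. dw_walk m n L u w \<and> dw_edge m n w v"
  then obtain w vs where vs: "length vs = L + 1" "vs ! 0 = u" "vs ! L = w"
    "\<forall>t < L. dw_edge m n (vs ! t) (vs ! (t + 1))" and e: "dw_edge m n w v"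
    unfolding dw_walk_def by blast
  have "length (vs @ [v]) = Suc L + 1" using vs by simp
  moreover have "(vs @ [v]) ! 0 = u" using vs by (simp add: nth_append)
  moreover have "(vs @ [v]) ! Suc L = v" using vs by (simp add: nth_append)
  moreover have "\<forall>t < Suc L. dw_edge m n ((vs @ [v]) ! t) ((vs @ [v]) ! (t + 1))"
  proof (intro allI impI)
    fix t assume t: "t < Suc L"
    show "dw_edge m n ((vs @ [v]) ! t) ((vs @ [v]) ! (t + 1))"
    proof (cases "t < L")
      case True then show ?thesis using vs t by (simp add: nth_append)
    next
      case False then have "t = L" using t by simp
      then show ?thesis using vs e by (simp add: nth_append)
    qed
  qed
  ultimately show "dw_walk m n (Suc L) u v" unfolding dw_walk_def by blast
qed

lemma A_nonneg_edge:
  assumes "x < m*(n-1)+1" "b < m*(n-1)+1"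
  shows "dw_adj m n $$ (x,b) = (if dw_edge m n (x+1) (b+1) then 1 else 0)"
  using assms unfolding dw_adj_def dw_nverts_def by simp

lemma walk_pow:
  assumes n: "n \<ge> 3" and a: "a < m*(n-1)+1"
  shows "\<forall>b < m*(n-1)+1. (dw_walk m n L (a+1) (b+1) \<longleftrightarrow> (dw_adj m n ^\<^sub>m L) $$ (a,b) \<noteq> 0)
      \<and> (dw_adj m n ^\<^sub>m L) $$ (a,b) \<ge> 0"
proof (induction L)
  case 0
  have "dim_row (dw_adj m n) = m*(n-1)+1" using A_carrier[of m n] by simp
  then show ?case using a by (auto simp: walk_0)
next
  case (Suc L)
  let ?N = "m*(n-1)+1"
  show ?case
  proof (intro allI impI)
    fix b assume b: "b < ?N"
    have e: "(dw_adj m n ^\<^sub>m Suc L) $$ (a,b) = (\<Sum>x<?N. (dw_adj m n ^\<^sub>m L) $$ (a,x) * dw_adj m n $$ (x,b))"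
      using mult_entry[OF pow_carrier_mat[OF A_carrier] A_carrier a b] by simp
    have nn: "\<forall>x\<in>{..<?N}. (dw_adj m n ^\<^sub>m L) $$ (a,x) * dw_adj m n $$ (x,b) \<ge> 0"
      using Suc.IH b by (auto simp: A_nonneg_edge)
    have "(dw_adj m n ^\<^sub>m Suc L) $$ (a,b) \<noteq> 0 \<longleftrightarrow>
        (\<exists>x\<in>{..<?N}. (dw_adj m n ^\<^sub>m L) $$ (a,x) * dw_adj m n $$ (x,b) \<noteq> 0)"
    proof -
      have z: "(\<Sum>x<?N. (dw_adj m n ^\<^sub>m L) $$ (a,x) * dw_adj m n $$ (x,b)) = 0 \<longleftrightarrow>
          (\<forall>x\<in>{..<?N}. (dw_adj m n ^\<^sub>m L) $$ (a,x) * dw_adj m n $$ (x,b) = 0)"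
        by (rule sum_nonneg_eq_0_iff) (use nn in auto)
      show ?thesis unfolding e using z by blast
    qed
    also have "\<dots> \<longleftrightarrow> (\<exists>x\<in>{..<?N}. dw_walk m n L (a+1) (x+1) \<and> dw_edge m n (x+1) (b+1))"
      using Suc.IH b by (auto simp: A_nonneg_edge)
    also have "\<dots> \<longleftrightarrow> (\<exists>w. dw_walk m n L (a+1) w \<and> dw_edge m n w (b+1))"
    proof
      assume "\<exists>w. dw_walk m n L (a+1) w \<and> dw_edge m n w (b+1)"
      then obtain w where w: "dw_walk m n L (a+1) w" "dw_edge m n w (b+1)" by blast
      have "1 \<le> w" "w \<le> ?N" using edge_range[OF n w(2)] by auto
      then show "\<exists>x\<in>{..<?N}. dw_walk m n L (a+1) (x+1) \<and> dw_edge m n (x+1) (b+1)"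
        using w by (intro bexI[of _ "w - 1"]) auto
    qed blast
    also have "\<dots> \<longleftrightarrow> dw_walk m n (Suc L) (a+1) (b+1)" by (simp add: walk_Suc)
    finally have eq: "(dw_adj m n ^\<^sub>m Suc L) $$ (a,b) \<noteq> 0 \<longleftrightarrow> dw_walk m n (Suc L) (a+1) (b+1)" .
    have ge: "(dw_adj m n ^\<^sub>m Suc L) $$ (a,b) \<ge> 0" unfolding e by (rule sum_nonneg) (use nn in auto)
    show "(dw_walk m n (Suc L) (a+1) (b+1) \<longleftrightarrow> (dw_adj m n ^\<^sub>m Suc L) $$ (a,b) \<noteq> 0)
      \<and> (dw_adj m n ^\<^sub>m Suc L) $$ (a,b) \<ge> 0" using eq ge by blast
  qed
qed

lemma ar1: "i = K + l \<Longrightarrow> 3 \<le> (l::nat) \<Longrightarrow> i - 1 = K + (l - 1) \<and> i - 1 - 1 = K + (l - 2)"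
  by linarith

lemma char:
  assumes n: "n \<ge> 3" and i: "1 \<le> i" "i \<le> m*(n-1)+1" and j: "1 \<le> j" "j \<le> m*(n-1)+1"
  shows "Pf n (i-1) (j-1) \<noteq> 0 \<longleftrightarrow>
              ((i = 1 \<and> (\<exists>k\<in>{1..m}. j = (k - 1) * (n - 1) + n))
             \<or> (\<exists>k\<in>{1..m}. i = (k - 1) * (n - 1) + 2 \<and> j = 1)
             \<or> (\<exists>k\<in>{1..m}. \<exists>l\<in>{3..n}. i = (k - 1) * (n - 1) + l \<and> j = i - 1)
             \<or> (\<exists>k\<in>{1..m}. \<exists>r\<in>{1..m}. \<exists>l\<in>{3..n}. k \<noteq> r \<and>
                   i = (k - 1) * (n - 1) + l \<and> j = (r - 1) * (n - 1) + (l - 1)))"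
  (is "?L \<longleftrightarrow> ?R")
proof
  define a where "a = i - 1"
  define b where "b = j - 1"
  have ia: "i = a + 1" and jb: "j = b + 1" using i j a_def b_def by auto
  have a: "a < m*(n-1)+1" and b: "b < m*(n-1)+1" using i j a_def b_def by auto
  assume L: ?L
  then have P: "(a = 0 \<and> ph n b = n-1) \<or> (a \<noteq> 0 \<and> ph n b + 1 = ph n a)"
    unfolding a_def[symmetric] b_def[symmetric] Pf_def by (auto split: if_splits)
  show ?R
  proof (cases "a = 0")
    case True
    then have pb: "ph n b = n-1" using P by auto
    then have b0: "b \<noteq> 0" using n ph_eq0[of n b] by auto
    have db: "b = cy n b * (n-1) + ph n b" using ph_dec[of n b] n b0 by auto
    have cb: "cy n b < m" using cy_lt[of n b m] n b0 b by simp
    have "j = (cy n b + 1 - 1) * (n-1) + n" using db pb jb n by simp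
    moreover have "cy n b + 1 \<in> {1..m}" using cb by simp
    moreover have "i = 1" using True ia by simp
    ultimately show ?thesis by (intro disjI1 conjI bexI[of _ "cy n b + 1"])
  next
    case False
    then have pa: "ph n b + 1 = ph n a" using P by auto
    have da: "a = cy n a * (n-1) + ph n a" "ph n a < n" using ph_dec[of n a] n False by auto
    have ca: "cy n a < m" using cy_lt[of n a m] n False a by simp
    have ka: "cy n a + 1 \<in> {1..m}" using ca by simp
    show ?thesis
    proof (cases "ph n a = 1")
      case True
      then have "b = 0" using pa ph_eq0[of n b] by simp
      moreover have "i = (cy n a + 1 - 1) * (n-1) + 2" using da True ia by simp
      ultimately show ?thesis using ka jb by (intro disjI2 disjI1 bexI[of _ "cy n a + 1"] conjI) simp_all
    next
      case F2: False
      then have b0: "b \<noteq> 0" using pa ph_eq0[of n b] by auto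
      have db: "b = cy n b * (n-1) + ph n b" using ph_dec[of n b] n b0 by auto
      have cb: "cy n b < m" using cy_lt[of n b m] n b0 b by simp
      have l: "ph n a + 1 \<in> {3..n}" using F2 da pa ph_eq0[of n b] b0 by auto
      have iE: "i = (cy n a + 1 - 1) * (n-1) + (ph n a + 1)" using da ia by simp
      show ?thesis
      proof (cases "cy n b = cy n a")
        case True
        then have "j = i - 1" using da db pa ia jb by simp
        then show ?thesis using ka l iE
          by (intro disjI2 disjI1 bexI[of _ "cy n a + 1"] bexI[of _ "ph n a + 1"] conjI) simp_all
      next
        case F3: False
        have "j = (cy n b + 1 - 1) * (n-1) + (ph n a + 1 - 1)" using db pa jb by simp
        moreover have "cy n b + 1 \<in> {1..m}" "cy n a + 1 \<noteq> cy n b + 1" using cb F3 by auto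
        ultimately show ?thesis using ka l iE
          by (intro disjI2 bexI[of _ "cy n a + 1"] bexI[of _ "cy n b + 1"] bexI[of _ "ph n a + 1"] conjI) simp_all
      qed
    qed
  qed
next
  assume R: ?R
  have r: "ph n (k*(n-1)+q) = q" "k*(n-1)+q \<noteq> 0" if "1 \<le> q" "q < n" for k q
    using ph_rep[of n q k] n that by auto
  from R show ?L
  proof (elim disjE conjE bexE)
    fix k assume "i = 1" "k \<in> {1..m}" "j = (k - 1) * (n - 1) + n"
    then have "i - 1 = 0" "j - 1 = (k-1)*(n-1) + (n-1)" using n by auto
    then show ?L using r[of "n-1" "k-1"] n by (simp add: Pf_def)
  next
    fix k assume "k \<in> {1..m}" "i = (k - 1) * (n - 1) + 2" "j = 1"
    then have "i - 1 = (k-1)*(n-1) + 1" "j - 1 = 0" using n by auto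
    then show ?L using r[of 1 "k-1"] n by (simp add: Pf_def)
  next
    fix k l assume "k \<in> {1..m}" "l \<in> {3..n}" "i = (k - 1) * (n - 1) + l" "j = i - 1"
    then have "i - 1 = (k-1)*(n-1) + (l-1)" "j - 1 = (k-1)*(n-1) + (l-2)"
      using ar1[of i "(k-1)*(n-1)" l] by auto
    moreover have "ph n ((k-1)*(n-1) + (l-1)) = l-1" "(k-1)*(n-1) + (l-1) \<noteq> 0" "ph n ((k-1)*(n-1) + (l-2)) = l-2"
      using r[of "l-1" "k-1"] r[of "l-2" "k-1"] \<open>l \<in> {3..n}\<close> by auto
    ultimately have "ph n (i-1) = l-1" "i - 1 \<noteq> 0" "ph n (j-1) = l-2" by simp_all
    then show ?L using \<open>l \<in> {3..n}\<close> unfolding Pf_def by auto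
  next
    fix k r' l assume "k \<in> {1..m}" "r' \<in> {1..m}" "l \<in> {3..n}" "k \<noteq> r'"
      "i = (k - 1) * (n - 1) + l" "j = (r' - 1) * (n - 1) + (l - 1)"
    then have "i - 1 = (k-1)*(n-1) + (l-1)" "j - 1 = (r'-1)*(n-1) + (l-2)"
      using ar1[of i "(k-1)*(n-1)" l] ar1[of "j+1" "(r'-1)*(n-1)" l] by auto
    moreover have "ph n ((k-1)*(n-1) + (l-1)) = l-1" "(k-1)*(n-1) + (l-1) \<noteq> 0" "ph n ((r'-1)*(n-1) + (l-2)) = l-2"
      using r[of "l-1" "k-1"] r[of "l-2" "r'-1"] \<open>l \<in> {3..n}\<close> by auto
    ultimately have "ph n (i-1) = l-1" "i - 1 \<noteq> 0" "ph n (j-1) = l-2" by simp_all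
    then show ?L using \<open>l \<in> {3..n}\<close> unfolding Pf_def by auto
  qed
qed

lemma smult_one_mat: "(1::real) \<cdot>\<^sub>m B = B"
  by (rule eq_matI) auto

theorem theorem3p3:
  fixes m n :: nat
  assumes "m \<ge> 2" and "n \<ge> 3"
  defines "N \<equiv> dw_nverts m n"
  defines "M \<equiv> dw_adj m n"
  shows "drazin_inverse M = (1 / real m) \<cdot>\<^sub>m (M ^\<^sub>m (n - 1)) \<and>
    (\<forall>i\<in>{1..N}. \<forall>j\<in>{1..N}.
           (drazin_inverse M $$ (i - 1, j - 1) \<noteq> 0 \<longrightarrow> drazin_inverse M $$ (i - 1, j - 1) = 1 / real m)
         \<and> (drazin_inverse M $$ (i - 1, j - 1) \<noteq> 0 \<longleftrightarrow>
              ((i = 1 \<and> (\<exists>k\<in>{1..m}. j = (k - 1) * (n - 1) + n))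
             \<or> (\<exists>k\<in>{1..m}. i = (k - 1) * (n - 1) + 2 \<and> j = 1)
             \<or> (\<exists>k\<in>{1..m}. \<exists>l\<in>{3..n}. i = (k - 1) * (n - 1) + l \<and> j = i - 1)
             \<or> (\<exists>k\<in>{1..m}. \<exists>r\<in>{1..m}. \<exists>l\<in>{3..n}. k \<noteq> r \<and>
                   i = (k - 1) * (n - 1) + l \<and> j = (r - 1) * (n - 1) + (l - 1))))
         \<and> (drazin_inverse M $$ (i - 1, j - 1) \<noteq> 0 \<longleftrightarrow> dw_walk m n (n - 1) i j))"
proof -
  have n: "n \<ge> 3" and m0: "real m \<noteq> 0" using assms by auto
  have NN: "N = m*(n-1)+1" unfolding N_def dw_nverts_def ..
  have A: "M \<in> carrier_mat N N" using A_carrier[of m n] unfolding M_def NN .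
  define P where "P = M ^\<^sub>m (n-1)"
  have PC: "P \<in> carrier_mat N N" using A unfolding P_def by simp
  have Pm: "P = mat N N (\<lambda>(a,b). Pf n a b)" using powP[OF n, of m] unfolding P_def M_def NN .
  have Qm: "M ^\<^sub>m n = mat N N (\<lambda>(a,b). Qf m n a b)" using powQ[OF n, of m] unfolding M_def NN .
  have P2: "M ^\<^sub>m (n-1+n) = real m \<cdot>\<^sub>m P"
  proof -
    have "M ^\<^sub>m (n-1+n) = P * M ^\<^sub>m n" unfolding P_def by (rule pow_add[OF A])
    also have "\<dots> = real m \<cdot>\<^sub>m P" unfolding Qm Pm NN by (rule PQ[OF n])
    finally show ?thesis .
  qed
  have PA: "P * M = M ^\<^sub>m n"
  proof -
    have "M ^\<^sub>m n = M ^\<^sub>m (Suc (n-1))" using n by simp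
    then show ?thesis unfolding P_def by simp
  qed
  have AP: "M * P = M ^\<^sub>m n"
  proof -
    have "M ^\<^sub>m n = M ^\<^sub>m (Suc (n-1))" using n by simp
    then show ?thesis unfolding P_def using pow_Suc_left[OF A, of "n-1"] by simp
  qed
  define X where "X = (1 / real m) \<cdot>\<^sub>m P"
  have XC: "X \<in> carrier_mat N N" unfolding X_def using PC by simp
  have MnC: "M ^\<^sub>m i \<in> carrier_mat N N" for i using A by simp
  have D1: "M ^\<^sub>m (n+1) * X = M ^\<^sub>m n"
  proof -
    have "M ^\<^sub>m (n+1) * X = (1 / real m) \<cdot>\<^sub>m (M ^\<^sub>m (n+1) * P)"
      unfolding X_def by (rule mult_smult_distrib[OF MnC PC])
    also have "M ^\<^sub>m (n+1) * P = M ^\<^sub>m ((n+1)+(n-1))" unfolding P_def by (rule pow_add[OF A, symmetric])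
    also have "(n+1)+(n-1) = Suc (n-1+n)" using n by simp
    also have "M ^\<^sub>m (Suc (n-1+n)) = (real m \<cdot>\<^sub>m P) * M" using P2 by simp
    also have "\<dots> = real m \<cdot>\<^sub>m (P * M)" by (rule mult_smult_assoc_mat[OF PC A])
    also have "(1 / real m) \<cdot>\<^sub>m (real m \<cdot>\<^sub>m (P * M)) = P * M"
      using m0 by (simp add: smult_smult_mat smult_one_mat)
    finally show ?thesis using PA by simp
  qed
  have XM: "X * M = (1 / real m) \<cdot>\<^sub>m M ^\<^sub>m n"
    unfolding X_def using mult_smult_assoc_mat[OF PC A] PA by simp
  have MX: "M * X = (1 / real m) \<cdot>\<^sub>m M ^\<^sub>m n"
    unfolding X_def using mult_smult_distrib[OF A PC] AP by simp
  have D2: "X * M * X = X"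
  proof -
    have "X * M * X = (1 / real m) \<cdot>\<^sub>m (M ^\<^sub>m n * X)"
      unfolding XM by (rule mult_smult_assoc_mat[OF MnC XC])
    also have "M ^\<^sub>m n * X = (1 / real m) \<cdot>\<^sub>m (M ^\<^sub>m n * P)"
      unfolding X_def by (rule mult_smult_distrib[OF MnC PC])
    also have "M ^\<^sub>m n * P = M ^\<^sub>m (n + (n-1))" unfolding P_def by (rule pow_add[OF A, symmetric])
    also have "n + (n-1) = n-1+n" by simp
    also have "(1 / real m) \<cdot>\<^sub>m ((1 / real m) \<cdot>\<^sub>m M ^\<^sub>m (n-1+n)) = X"
      unfolding P2 X_def using m0 by (simp add: smult_smult_mat)
    finally show ?thesis .
  qed
  have D3: "M * X = X * M" using XM MX by simp
  have dimA: "dim_row M = N" using A by simp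
  have isD: "is_drazin_inverse M X"
    unfolding is_drazin_inverse_def dimA using XC D1 D2 D3 by blast
  have uniq: "Y = X" if "is_drazin_inverse M Y" for Y
  proof -
    from that obtain k where Y: "Y \<in> carrier_mat N N" "M ^\<^sub>m (k+1) * Y = M ^\<^sub>m k"
      "Y * M * Y = Y" "M * Y = Y * M" unfolding is_drazin_inverse_def dimA by blast
    show ?thesis by (rule drazin_unique[OF A Y(1) XC Y(2) Y(3) Y(4) D1 D2 D3])
  qed
  have DX: "drazin_inverse M = X" unfolding drazin_inverse_def by (rule the_equality[where P = "is_drazin_inverse M", OF isD uniq])
  have ent: "drazin_inverse M $$ (i-1, j-1) = (1 / real m) * Pf n (i-1) (j-1)"
    if "i \<in> {1..N}" "j \<in> {1..N}" for i j
    using that unfolding DX X_def Pm by auto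
  have Pf01: "Pf n a b = 0 \<or> Pf n a b = 1" for a b unfolding Pf_def by auto
  have walk: "dw_walk m n (n-1) i j \<longleftrightarrow> Pf n (i-1) (j-1) \<noteq> 0"
    if "i \<in> {1..N}" "j \<in> {1..N}" for i j
  proof -
    have a: "i - 1 < m*(n-1)+1" "j - 1 < m*(n-1)+1" using that NN by auto
    have "dw_walk m n (n-1) (i-1+1) (j-1+1) \<longleftrightarrow> (M ^\<^sub>m (n-1)) $$ (i-1, j-1) \<noteq> 0"
      using walk_pow[OF n a(1), where L = "n-1"] a(2) unfolding M_def by blast
    moreover have "i - 1 + 1 = i" "j - 1 + 1 = j" using that by auto
    moreover have "(M ^\<^sub>m (n-1)) $$ (i-1, j-1) = Pf n (i-1) (j-1)"
      using a unfolding P_def[symmetric] Pm NN by simp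
    ultimately show ?thesis by simp
  qed
  show ?thesis
  proof (intro conjI ballI)
    show "drazin_inverse M = (1 / real m) \<cdot>\<^sub>m (M ^\<^sub>m (n - 1))" using DX X_def P_def by simp
  next
    fix i j assume ij: "i \<in> {1..N}" "j \<in> {1..N}"
    show "drazin_inverse M $$ (i - 1, j - 1) \<noteq> 0 \<longrightarrow> drazin_inverse M $$ (i - 1, j - 1) = 1 / real m"
      using ent[OF ij] Pf01[of "i-1" "j-1"] by auto
    have nz: "drazin_inverse M $$ (i - 1, j - 1) \<noteq> 0 \<longleftrightarrow> Pf n (i-1) (j-1) \<noteq> 0"
      using ent[OF ij] m0 by simp
    have ij': "1 \<le> i" "i \<le> m*(n-1)+1" "1 \<le> j" "j \<le> m*(n-1)+1" using ij NN by auto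
    show "drazin_inverse M $$ (i - 1, j - 1) \<noteq> 0 \<longleftrightarrow>
              ((i = 1 \<and> (\<exists>k\<in>{1..m}. j = (k - 1) * (n - 1) + n))
             \<or> (\<exists>k\<in>{1..m}. i = (k - 1) * (n - 1) + 2 \<and> j = 1)
             \<or> (\<exists>k\<in>{1..m}. \<exists>l\<in>{3..n}. i = (k - 1) * (n - 1) + l \<and> j = i - 1)
             \<or> (\<exists>k\<in>{1..m}. \<exists>r\<in>{1..m}. \<exists>l\<in>{3..n}. k \<noteq> r \<and>
                   i = (k - 1) * (n - 1) + l \<and> j = (r - 1) * (n - 1) + (l - 1)))"
      unfolding nz by (rule char[OF n ij'])
    show "drazin_inverse M $$ (i - 1, j - 1) \<noteq> 0 \<longleftrightarrow> dw_walk m n (n - 1) i j"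
      unfolding nz using walk[OF ij] by simp
  qed
qed

end
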